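(* With the setup below, the sequence $x_1,\ldots,x_p,y_1,\ldots,y_q$ is a regular sequence on the $R$-module $\widetilde{F}\cong R/\big(J+(\widetilde{\vec{x}}\widetilde{\vec{y}})+J'\big)$.
   Context: Let $k$ be a field, $\vec{x}=x_1,\ldots,x_n$, $\vec{y}=y_1,\ldots,y_{n'}$, $R=k[[\vec{x},\vec{y}]]$, $0\le p\le n$, $0\le q\le n'$. Let $J$ be an ideal generated by power series in $x_{p+1},\ldots,x_n$ only with $J\subseteq(x_{p+1},\ldots,x_n)^2$, and $J'$ an ideal generated by power series in $y_{q+1},\ldots,y_{n'}$ only with $J'\subseteq(y_{q+1},\ldots,y_{n'})^2$ (viewed in $R$). Let $\widetilde{\vec{x}}=x_{p+1},\ldots,x_n$, $\widetilde{\vec{y}}=y_{q+1},\ldots,y_{n'}$, $W=R/(\widetilde{\vec{x}},\widetilde{\vec{y}})$, and $\widetilde{F}=\frac{R}{J+(\widetilde{\vec{y}})}\times_W\frac{R}{(\widetilde{\vec{x}})+J'}$, the fiber product over the natural surjections onto $W$; $(\widetilde{\vec{x}}\widetilde{\vec{y}})$ is the ideal generated by all $x_iy_j$ with $p<i\le n$, $q<j\le n'$. *)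

theory Defs
  imports "HOL-Algebra.Algebra"
begin

text \<open>A monomial is an exponent vector nat => nat; a power series in the
variables z_0..z_{N-1} is a coefficient function on monomials that vanishes
on monomials involving a variable z_i with i >= N.\<close>

type_synonym mono = "nat \<Rightarrow> nat"

definition mono_in :: "nat set \<Rightarrow> mono \<Rightarrow> bool" where
  "mono_in V m \<longleftrightarrow> (\<forall>i. i \<notin> V \<longrightarrow> m i = 0)"

definition ps_ring :: "nat \<Rightarrow> ((mono \<Rightarrow> 'a::field)) ring" where
  "ps_ring N = \<lparr> carrier = {f. \<forall>m. f m \<noteq> 0 \<longrightarrow> mono_in {..<N} m},
      monoid.mult = (\<lambda>f g m. if mono_in {..<N} m
                       then (\<Sum>a\<in>{a. \<forall>i. a i \<le> m i}. f a * g (\<lambda>i. m i - a i))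
                       else 0),
      monoid.one = (\<lambda>m. if (\<forall>i. m i = 0) then 1 else 0),
      ring.zero = (\<lambda>m. 0),
      ring.add = (\<lambda>f g m. f m + g m) \<rparr>"

definition ps_var :: "nat \<Rightarrow> (mono \<Rightarrow> 'a::field)" where
  "ps_var i = (\<lambda>m. if m = (\<lambda>j. if j = i then 1 else 0) then 1 else 0)"


definition submod_gen :: "('r, 'm) module \<Rightarrow> 'r list \<Rightarrow> 'm set" where
  "submod_gen M zs = {finsum M (\<lambda>j. zs ! j \<odot>\<^bsub>M\<^esub> v j) {..<length zs} | v.
                        v \<in> {..<length zs} \<rightarrow> carrier M}"

definition regular_sequence :: "('r, 'x) ring_scheme \<Rightarrow> ('r, 'm) module \<Rightarrow> 'r list \<Rightarrow> bool" where
  "regular_sequence R M zs \<longleftrightarrow>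
     set zs \<subseteq> carrier R \<and>
     (\<forall>i < length zs. \<forall>v \<in> carrier M.
        zs ! i \<odot>\<^bsub>M\<^esub> v \<in> submod_gen M (take i zs) \<longrightarrow> v \<in> submod_gen M (take i zs)) \<and>
     submod_gen M zs \<noteq> carrier M"

definition fiber_product_module ::
  "('a, 'x) ring_scheme \<Rightarrow> 'a set \<Rightarrow> 'a set \<Rightarrow> 'a set \<Rightarrow> ('a, 'a set \<times> 'a set) module" where
  "fiber_product_module R I1 I2 I0 = \<lparr>
     carrier = {(A, B). \<exists>a\<in>carrier R. \<exists>b\<in>carrier R.
                  A = I1 +>\<^bsub>R\<^esub> a \<and> B = I2 +>\<^bsub>R\<^esub> b \<and> a \<ominus>\<^bsub>R\<^esub> b \<in> I0},
     monoid.mult = (\<lambda>_ _. undefined),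
     monoid.one = undefined,
     ring.zero = (I1, I2),
     ring.add = (\<lambda>(A, B) (C, D). (A \<oplus>\<^bsub>R Quot I1\<^esub> C, B \<oplus>\<^bsub>R Quot I2\<^esub> D)),
     module.smult = (\<lambda>r (A, B). ((I1 +>\<^bsub>R\<^esub> r) \<otimes>\<^bsub>R Quot I1\<^esub> A, (I2 +>\<^bsub>R\<^esub> r) \<otimes>\<^bsub>R Quot I2\<^esub> B)) \<rparr>"

end

theory Submission
  imports Defs
begin



lemma ps_simps:
  "carrier (ps_ring N) = {f. \<forall>m. f m \<noteq> 0 \<longrightarrow> mono_in {..<N} m}"
  "f \<otimes>\<^bsub>ps_ring N\<^esub> g = (\<lambda>m. if mono_in {..<N} m
                       then (\<Sum>a\<in>{a. \<forall>i. a i \<le> m i}. f a * g (\<lambda>i. m i - a i)) else 0)"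
  "\<one>\<^bsub>ps_ring N\<^esub> = (\<lambda>m. if (\<forall>i. m i = 0) then 1 else 0)"
  "\<zero>\<^bsub>ps_ring N\<^esub> = (\<lambda>m. 0)"
  "f \<oplus>\<^bsub>ps_ring N\<^esub> g = (\<lambda>m. f m + g m)"
  by (simp_all add: ps_ring_def)

lemma finite_D:
  assumes "mono_in {..<N} m"
  shows "finite {a::mono. \<forall>i. a i \<le> m i}"
proof (rule inj_on_finite[where f="\<lambda>a. restrict a {..<N}" and B="PiE {..<N} (\<lambda>i. {..m i})"])
  show "inj_on (\<lambda>a. restrict a {..<N}) {a::mono. \<forall>i. a i \<le> m i}"
  proof (rule inj_onI)
    fix a b assume a: "a \<in> {a::mono. \<forall>i. a i \<le> m i}" and b: "b \<in> {a::mono. \<forall>i. a i \<le> m i}"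
      and e: "restrict a {..<N} = restrict b {..<N}"
    show "a = b"
    proof
      fix i show "a i = b i"
      proof (cases "i < N")
        case True then show ?thesis using fun_cong[OF e, of i] by simp
      next
        case False then have "m i = 0" using assms by (auto simp: mono_in_def)
        then show ?thesis using a b by (metis le_zero_eq mem_Collect_eq)
      qed
    qed
  qed
  show "(\<lambda>a. restrict a {..<N}) ` {a::mono. \<forall>i. a i \<le> m i} \<subseteq> PiE {..<N} (\<lambda>i. {..m i})"
    by (auto simp: PiE_def extensional_def)
  show "finite (PiE {..<N} (\<lambda>i. {..m i}))" by (rule finite_PiE) auto
qed

lemma mono_in_le: "mono_in V m \<Longrightarrow> \<forall>i. a i \<le> m i \<Longrightarrow> mono_in V a"
  unfolding mono_in_def by (metis le_zero_eq)

abbreviation Dset :: "mono \<Rightarrow> mono set" where "Dset m \<equiv> {a. \<forall>i. a i \<le> m i}"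

lemma ps_comm:
  fixes f g :: "mono \<Rightarrow> 'a::field"
  shows "f \<otimes>\<^bsub>ps_ring N\<^esub> g = g \<otimes>\<^bsub>ps_ring N\<^esub> f"
proof
  fix m
  show "(f \<otimes>\<^bsub>ps_ring N\<^esub> g) m = (g \<otimes>\<^bsub>ps_ring N\<^esub> f) m"
  proof (cases "mono_in {..<N} m")
    case True
    have "(\<Sum>a\<in>Dset m. f a * g (\<lambda>i. m i - a i)) = (\<Sum>b\<in>Dset m. g b * f (\<lambda>i. m i - b i))"
      by (rule sum.reindex_bij_witness[where i="\<lambda>b i. m i - b i" and j="\<lambda>b i. m i - b i"])
         (auto simp: mult.commute)
    then show ?thesis using True by (simp add: ps_simps)
  qed (simp add: ps_simps)
qed

lemma ps_assoc:
  fixes f g h :: "mono \<Rightarrow> 'a::field"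
  shows "(f \<otimes>\<^bsub>ps_ring N\<^esub> g) \<otimes>\<^bsub>ps_ring N\<^esub> h = f \<otimes>\<^bsub>ps_ring N\<^esub> (g \<otimes>\<^bsub>ps_ring N\<^esub> h)"
proof
  fix m
  show "((f \<otimes>\<^bsub>ps_ring N\<^esub> g) \<otimes>\<^bsub>ps_ring N\<^esub> h) m = (f \<otimes>\<^bsub>ps_ring N\<^esub> (g \<otimes>\<^bsub>ps_ring N\<^esub> h)) m"
  proof (cases "mono_in {..<N} m")
    case True
    have fin: "finite (Dset m)" by (rule finite_D[OF True])
    have "((f \<otimes>\<^bsub>ps_ring N\<^esub> g) \<otimes>\<^bsub>ps_ring N\<^esub> h) m
        = (\<Sum>a\<in>Dset m. (\<Sum>b\<in>Dset a. f b * g (\<lambda>i. a i - b i)) * h (\<lambda>i. m i - a i))"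
      using True by (auto simp: ps_simps intro!: sum.cong dest: mono_in_le)
    also have "\<dots> = (\<Sum>a\<in>Dset m. \<Sum>b\<in>{b\<in>Dset m. \<forall>i. b i \<le> a i}. f b * g (\<lambda>i. a i - b i) * h (\<lambda>i. m i - a i))"
    proof (rule sum.cong[OF refl])
      fix a assume "a \<in> Dset m"
      then have "Dset a = {b\<in>Dset m. \<forall>i. b i \<le> a i}" using order_trans by fastforce
      then show "(\<Sum>b\<in>Dset a. f b * g (\<lambda>i. a i - b i)) * h (\<lambda>i. m i - a i) = (\<Sum>b\<in>{b\<in>Dset m. \<forall>i. b i \<le> a i}. f b * g (\<lambda>i. a i - b i) * h (\<lambda>i. m i - a i))"
        by (simp add: sum_distrib_right)
    qed
    also have "\<dots> = (\<Sum>b\<in>Dset m. \<Sum>a\<in>{a\<in>Dset m. \<forall>i. b i \<le> a i}. f b * g (\<lambda>i. a i - b i) * h (\<lambda>i. m i - a i))"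
      by (rule sum.swap_restrict[OF fin fin])
    also have "\<dots> = (\<Sum>b\<in>Dset m. \<Sum>c\<in>Dset (\<lambda>i. m i - b i). f b * (g c * h (\<lambda>i. (m i - b i) - c i)))"
    proof (rule sum.cong[OF refl])
      fix b assume b: "b \<in> Dset m"
      show "(\<Sum>a\<in>{a\<in>Dset m. \<forall>i. b i \<le> a i}. f b * g (\<lambda>i. a i - b i) * h (\<lambda>i. m i - a i)) = (\<Sum>c\<in>Dset (\<lambda>i. m i - b i). f b * (g c * h (\<lambda>i. (m i - b i) - c i)))"
        apply (rule sum.reindex_bij_witness[where i="\<lambda>c i. b i + c i" and j="\<lambda>a i. a i - b i"])
        using b by (auto simp: fun_eq_iff le_diff_conv2 add.commute diff_diff_left)
    qed
    also have "\<dots> = (f \<otimes>\<^bsub>ps_ring N\<^esub> (g \<otimes>\<^bsub>ps_ring N\<^esub> h)) m"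
    proof -
      have "\<And>b. mono_in {..<N} (\<lambda>i. m i - b i)" using True mono_in_le[OF True] by (simp add: mono_in_le)
      then show ?thesis using True by (simp add: ps_simps sum_distrib_left)
    qed
    finally show ?thesis .
  qed (simp add: ps_simps)
qed


lemma ps_one_mult:
  fixes x :: "mono \<Rightarrow> 'a::field"
  assumes "x \<in> carrier (ps_ring N)"
  shows "\<one>\<^bsub>ps_ring N\<^esub> \<otimes>\<^bsub>ps_ring N\<^esub> x = x"
proof
  fix m
  show "(\<one>\<^bsub>ps_ring N\<^esub> \<otimes>\<^bsub>ps_ring N\<^esub> x) m = x m"
  proof (cases "mono_in {..<N} m")
    case True
    have "(\<Sum>a\<in>Dset m. (if \<forall>i. a i = 0 then 1 else 0) * x (\<lambda>i. m i - a i))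
        = (\<Sum>a\<in>Dset m. if a = (\<lambda>i. 0) then x m else 0)"
      by (rule sum.cong) (auto simp: fun_eq_iff)
    also have "\<dots> = x m" using finite_D[OF True] by (simp add: sum.delta')
    finally show ?thesis using True by (simp add: ps_simps)
  next
    case False then show ?thesis using assms by (auto simp: ps_simps)
  qed
qed

lemma ps_cring: "cring (ps_ring N :: (mono \<Rightarrow> 'a::field) ring)"
proof (rule cringI)
  show "abelian_group (ps_ring N :: (mono \<Rightarrow> 'a::field) ring)"
  proof (rule abelian_groupI)
    fix x :: "mono \<Rightarrow> 'a" assume x: "x \<in> carrier (ps_ring N)"
    show "\<exists>y\<in>carrier (ps_ring N). y \<oplus>\<^bsub>ps_ring N\<^esub> x = \<zero>\<^bsub>ps_ring N\<^esub>"
      by (rule bexI[of _ "\<lambda>m. - x m"]) (use x in \<open>auto simp: ps_simps\<close>)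
  qed (auto simp: ps_simps add.assoc add.commute, metis add.right_neutral)
  show "comm_monoid (ps_ring N :: (mono \<Rightarrow> 'a::field) ring)"
  proof (rule comm_monoidI)
    fix x y :: "mono \<Rightarrow> 'a"
    show "x \<otimes>\<^bsub>ps_ring N\<^esub> y \<in> carrier (ps_ring N)" by (auto simp: ps_simps)
    show "x \<otimes>\<^bsub>ps_ring N\<^esub> y = y \<otimes>\<^bsub>ps_ring N\<^esub> x" by (rule ps_comm)
  next
    show "\<one>\<^bsub>ps_ring N\<^esub> \<in> carrier (ps_ring N :: (mono \<Rightarrow> 'a::field) ring)"
      by (auto simp: ps_simps mono_in_def)
  qed (auto simp: ps_assoc ps_one_mult)
  fix x y z :: "mono \<Rightarrow> 'a"
  show "(x \<oplus>\<^bsub>ps_ring N\<^esub> y) \<otimes>\<^bsub>ps_ring N\<^esub> z = x \<otimes>\<^bsub>ps_ring N\<^esub> z \<oplus>\<^bsub>ps_ring N\<^esub> y \<otimes>\<^bsub>ps_ring N\<^esub> z"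
    by (auto simp: ps_simps fun_eq_iff distrib_right sum.distrib)
qed





definition phi :: "nat \<Rightarrow> (mono \<Rightarrow> 'a::field) \<Rightarrow> (mono \<Rightarrow> 'a)" where
  "phi t f = (\<lambda>m. if m t = 0 then f m else 0)"

definition shift :: "nat \<Rightarrow> (mono \<Rightarrow> 'a::field) \<Rightarrow> (mono \<Rightarrow> 'a)" where
  "shift t f = (\<lambda>m. f (m(t := Suc (m t))))"

lemma ps_neg:
  fixes x :: "mono \<Rightarrow> 'a::field"
  assumes "x \<in> carrier (ps_ring N)"
  shows "\<ominus>\<^bsub>ps_ring N\<^esub> x = (\<lambda>m. - x m)"
proof -
  interpret cring "ps_ring N :: (mono \<Rightarrow> 'a) ring" by (rule ps_cring)
  show ?thesis by (rule minus_equality) (use assms in \<open>auto simp: ps_simps\<close>)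
qed

lemma var_carrier: "t < N \<Longrightarrow> (ps_var t :: mono \<Rightarrow> 'a::field) \<in> carrier (ps_ring N)"
  by (auto simp: ps_simps ps_var_def mono_in_def)

lemma phi_carrier: "f \<in> carrier (ps_ring N) \<Longrightarrow> phi t f \<in> carrier (ps_ring N)"
  by (auto simp: ps_simps phi_def)

lemma mono_in_upd: "t < N \<Longrightarrow> mono_in {..<N} (m(t := k)) = mono_in {..<N} m"
  by (auto simp: mono_in_def)

lemma shift_carrier: "t < N \<Longrightarrow> f \<in> carrier (ps_ring N) \<Longrightarrow> shift t f \<in> carrier (ps_ring N)"
  by (auto simp: ps_simps shift_def mono_in_upd)

lemma var_mult:
  fixes w :: "mono \<Rightarrow> 'a::field"
  assumes "t < N"
  shows "(ps_var t \<otimes>\<^bsub>ps_ring N\<^esub> w) m = (if mono_in {..<N} m \<and> m t \<noteq> 0 then w (m(t := m t - 1)) else 0)"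
proof (cases "mono_in {..<N} m")
  case True
  let ?e = "(\<lambda>j. if j = t then 1 else 0) :: mono"
  have e: "(\<lambda>i. m i - ?e i) = m(t := m t - 1)" by (auto simp: fun_eq_iff)
  have "(\<Sum>a\<in>Dset m. ps_var t a * w (\<lambda>i. m i - a i)) = (\<Sum>a\<in>Dset m. if a = ?e then w (m(t := m t - 1)) else 0)"
  proof (rule sum.cong[OF refl])
    fix a show "ps_var t a * w (\<lambda>i. m i - a i) = (if a = ?e then w (m(t := m t - 1)) else 0)"
    proof (cases "a = ?e")
      case True
      then show ?thesis by (simp only: e ps_var_def simp_thms if_True mult_1_left)
    qed (simp add: ps_var_def)
  qed
  also have "\<dots> = (if m t \<noteq> 0 then w (m(t := m t - 1)) else 0)"
    using finite_D[OF True] by (simp add: sum.delta')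
  finally show ?thesis using True by (simp add: ps_simps)
qed (simp add: ps_simps)

lemma ps_add_apply: "(f \<oplus>\<^bsub>ps_ring N\<^esub> g) m = f m + g m"
  by (simp add: ps_simps)

lemma ps_carrierD: "f \<in> carrier (ps_ring N) \<Longrightarrow> \<not> mono_in {..<N} m \<Longrightarrow> f m = 0"
  by (auto simp: ps_simps)

lemma shift_var_mult:
  fixes w :: "mono \<Rightarrow> 'a::field"
  assumes "t < N" "w \<in> carrier (ps_ring N)"
  shows "shift t (ps_var t \<otimes>\<^bsub>ps_ring N\<^esub> w) = w"
  using assms by (auto simp: shift_def var_mult mono_in_upd fun_eq_iff ps_carrierD)

lemma phi_mult:
  fixes f g :: "mono \<Rightarrow> 'a::field"
  shows "phi t (f \<otimes>\<^bsub>ps_ring N\<^esub> g) = phi t f \<otimes>\<^bsub>ps_ring N\<^esub> phi t g"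
proof
  fix m
  show "phi t (f \<otimes>\<^bsub>ps_ring N\<^esub> g) m = (phi t f \<otimes>\<^bsub>ps_ring N\<^esub> phi t g) m"
  proof (cases "mono_in {..<N} m")
    case True
    show ?thesis
    proof (cases "m t = 0")
      case True
      have "(\<Sum>a\<in>Dset m. f a * g (\<lambda>i. m i - a i)) = (\<Sum>a\<in>Dset m. phi t f a * phi t g (\<lambda>i. m i - a i))"
      proof (rule sum.cong[OF refl])
        fix a assume "a \<in> Dset m"
        then have "a t = 0" using True by (metis le_zero_eq mem_Collect_eq)
        then show "f a * g (\<lambda>i. m i - a i) = phi t f a * phi t g (\<lambda>i. m i - a i)"
          using True by (simp add: phi_def)
      qed
      then show ?thesis using \<open>mono_in {..<N} m\<close> True by (simp add: ps_simps phi_def)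
    next
      case False
      have "(\<Sum>a\<in>Dset m. phi t f a * phi t g (\<lambda>i. m i - a i)) = 0"
      proof (rule sum.neutral, rule ballI)
        fix a assume "a \<in> Dset m"
        show "phi t f a * phi t g (\<lambda>i. m i - a i) = 0"
          using False by (cases "a t = 0") (simp_all add: phi_def)
      qed
      then show ?thesis using \<open>mono_in {..<N} m\<close> False by (simp add: ps_simps phi_def)
    qed
  qed (simp add: ps_simps phi_def)
qed

lemma key_decomp:
  fixes f :: "mono \<Rightarrow> 'a::field"
  assumes "t < N" "f \<in> carrier (ps_ring N)"
  shows "f = phi t f \<oplus>\<^bsub>ps_ring N\<^esub> ps_var t \<otimes>\<^bsub>ps_ring N\<^esub> shift t f"
proof
  fix m
  have "m(t := Suc (m t - 1)) = m" if "m t \<noteq> 0" using that by auto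
  then show "f m = (phi t f \<oplus>\<^bsub>ps_ring N\<^esub> ps_var t \<otimes>\<^bsub>ps_ring N\<^esub> shift t f) m"
    using assms by (auto simp: ps_add_apply var_mult phi_def shift_def ps_carrierD)
qed


lemma shift_add: "shift t (f \<oplus>\<^bsub>ps_ring N\<^esub> g) = shift t f \<oplus>\<^bsub>ps_ring N\<^esub> shift t g"
  by (simp add: ps_simps shift_def)

lemma shift_zero: "shift t \<zero>\<^bsub>ps_ring N\<^esub> = \<zero>\<^bsub>ps_ring N\<^esub>"
  by (simp add: ps_simps shift_def)

lemma shift_neg: "t < N \<Longrightarrow> f \<in> carrier (ps_ring N) \<Longrightarrow>
   shift t (\<ominus>\<^bsub>ps_ring N\<^esub> f) = \<ominus>\<^bsub>ps_ring N\<^esub> shift t f"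
  using ps_neg[OF shift_carrier, of t N f] ps_neg[of f N] by (simp add: shift_def)

lemma shift_fixed: "(\<forall>m. g m \<noteq> 0 \<longrightarrow> m t = 0) \<Longrightarrow> shift t g = \<zero>\<^bsub>ps_ring N\<^esub>"
  by (auto simp: ps_simps shift_def fun_eq_iff)

lemma phi_fixed: "(\<forall>m. g m \<noteq> 0 \<longrightarrow> m t = 0) \<Longrightarrow> phi t g = g"
  by (auto simp: phi_def fun_eq_iff)

lemma shift_phi: "shift t (phi t f) = \<zero>\<^bsub>ps_ring N\<^esub>"
  by (auto simp: ps_simps shift_def phi_def fun_eq_iff)

lemma var_other_fixed: "s \<noteq> t \<Longrightarrow> \<forall>m. (ps_var s :: mono \<Rightarrow> 'a::field) m \<noteq> 0 \<longrightarrow> m t = 0"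
  by (auto simp: ps_var_def)

lemma shift_var_self: "shift t (ps_var t) = \<one>\<^bsub>ps_ring N\<^esub>"
proof
  fix m :: mono
  have "(m(t := Suc (m t)) = (\<lambda>j. if j = t then 1 else 0)) = (\<forall>i. m i = 0)"
    by (auto simp: fun_eq_iff split: if_splits)
  then show "shift t (ps_var t) m = (\<one>\<^bsub>ps_ring N\<^esub> :: mono \<Rightarrow> 'a) m"
    by (simp add: shift_def ps_var_def ps_simps)
qed

lemma phi_var_self: "phi t (ps_var t) = \<zero>\<^bsub>ps_ring N\<^esub>"
  by (auto simp: phi_def ps_var_def ps_simps fun_eq_iff)

lemma shift_mult:
  fixes r k :: "mono \<Rightarrow> 'a::field"
  assumes t: "t < N" and r: "r \<in> carrier (ps_ring N)" and k: "k \<in> carrier (ps_ring N)"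
  shows "shift t (r \<otimes>\<^bsub>ps_ring N\<^esub> k) = shift t r \<otimes>\<^bsub>ps_ring N\<^esub> k \<oplus>\<^bsub>ps_ring N\<^esub> phi t r \<otimes>\<^bsub>ps_ring N\<^esub> shift t k"
proof -
  interpret R: cring "ps_ring N :: (mono \<Rightarrow> 'a) ring" by (rule ps_cring)
  define v where "v = (ps_var t :: mono \<Rightarrow> 'a)"
  have v: "v \<in> carrier (ps_ring N)" unfolding v_def by (rule var_carrier[OF t])
  have pr: "phi t r \<in> carrier (ps_ring N)" "phi t k \<in> carrier (ps_ring N)"
    using r k by (simp_all add: phi_carrier)
  have sr: "shift t r \<in> carrier (ps_ring N)" "shift t k \<in> carrier (ps_ring N)"
    using r k t by (simp_all add: shift_carrier)
  have dr: "r = phi t r \<oplus>\<^bsub>ps_ring N\<^esub> v \<otimes>\<^bsub>ps_ring N\<^esub> shift t r"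
    unfolding v_def by (rule key_decomp[OF t r])
  have dk: "k = phi t k \<oplus>\<^bsub>ps_ring N\<^esub> v \<otimes>\<^bsub>ps_ring N\<^esub> shift t k"
    unfolding v_def by (rule key_decomp[OF t k])
  have "r \<otimes>\<^bsub>ps_ring N\<^esub> k = phi t r \<otimes>\<^bsub>ps_ring N\<^esub> k \<oplus>\<^bsub>ps_ring N\<^esub> v \<otimes>\<^bsub>ps_ring N\<^esub> (shift t r \<otimes>\<^bsub>ps_ring N\<^esub> k)"
    by (subst dr) (simp add: R.l_distr R.m_assoc pr sr v k)
  also have "phi t r \<otimes>\<^bsub>ps_ring N\<^esub> k = phi t r \<otimes>\<^bsub>ps_ring N\<^esub> phi t k \<oplus>\<^bsub>ps_ring N\<^esub> v \<otimes>\<^bsub>ps_ring N\<^esub> (phi t r \<otimes>\<^bsub>ps_ring N\<^esub> shift t k)"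
    by (subst dk) (simp add: R.r_distr R.m_lcomm pr sr v)
  finally have e0: "r \<otimes>\<^bsub>ps_ring N\<^esub> k = phi t r \<otimes>\<^bsub>ps_ring N\<^esub> phi t k \<oplus>\<^bsub>ps_ring N\<^esub>
      v \<otimes>\<^bsub>ps_ring N\<^esub> (shift t r \<otimes>\<^bsub>ps_ring N\<^esub> k \<oplus>\<^bsub>ps_ring N\<^esub> phi t r \<otimes>\<^bsub>ps_ring N\<^esub> shift t k)"
    by (simp add: R.r_distr R.a_ac pr sr v k)
  have e: "r \<otimes>\<^bsub>ps_ring N\<^esub> k = phi t (r \<otimes>\<^bsub>ps_ring N\<^esub> k) \<oplus>\<^bsub>ps_ring N\<^esub>
      v \<otimes>\<^bsub>ps_ring N\<^esub> (shift t r \<otimes>\<^bsub>ps_ring N\<^esub> k \<oplus>\<^bsub>ps_ring N\<^esub> phi t r \<otimes>\<^bsub>ps_ring N\<^esub> shift t k)"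
    unfolding phi_mult by (rule e0)
  have "shift t (r \<otimes>\<^bsub>ps_ring N\<^esub> k) = shift t (phi t (r \<otimes>\<^bsub>ps_ring N\<^esub> k)) \<oplus>\<^bsub>ps_ring N\<^esub>
      shift t (v \<otimes>\<^bsub>ps_ring N\<^esub> (shift t r \<otimes>\<^bsub>ps_ring N\<^esub> k \<oplus>\<^bsub>ps_ring N\<^esub> phi t r \<otimes>\<^bsub>ps_ring N\<^esub> shift t k))"
    by (subst e) (rule shift_add)
  also have "\<dots> = shift t r \<otimes>\<^bsub>ps_ring N\<^esub> k \<oplus>\<^bsub>ps_ring N\<^esub> phi t r \<otimes>\<^bsub>ps_ring N\<^esub> shift t k"
    unfolding v_def using t pr sr k by (simp add: shift_phi[of t _ N] shift_var_mult)
  finally show ?thesis .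
qed


lemma shift_ideal:
  fixes S :: "(mono \<Rightarrow> 'a::field) set"
  assumes t: "t < N" and S: "S \<subseteq> carrier (ps_ring N)"
    and h: "\<forall>s\<in>S. shift t s \<in> Idl\<^bsub>ps_ring N\<^esub> S"
  shows "\<forall>k\<in>Idl\<^bsub>ps_ring N\<^esub> S. shift t k \<in> Idl\<^bsub>ps_ring N\<^esub> S"
proof -
  interpret R: cring "ps_ring N :: (mono \<Rightarrow> 'a) ring" by (rule ps_cring)
  interpret I: ideal "Idl\<^bsub>ps_ring N\<^esub> S" "ps_ring N" by (rule R.genideal_ideal[OF S])
  let ?T = "{k \<in> Idl\<^bsub>ps_ring N\<^esub> S. shift t k \<in> Idl\<^bsub>ps_ring N\<^esub> S}"
  have "ideal ?T (ps_ring N)"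
  proof (rule idealI)
    show "ring (ps_ring N :: (mono \<Rightarrow> 'a) ring)" by (rule R.ring_axioms)
    show "subgroup ?T (add_monoid (ps_ring N))"
    proof (rule R.add.subgroupI)
      show "?T \<subseteq> carrier (ps_ring N)" using I.Icarr by blast
      show "?T \<noteq> {}" using shift_zero[of t N] I.additive_subgroup_axioms
        by (metis (no_types, lifting) I.zero_closed empty_iff mem_Collect_eq)
    next
      fix a assume a: "a \<in> ?T"
      then have ac: "a \<in> carrier (ps_ring N)" using I.Icarr by blast
      show "\<ominus>\<^bsub>ps_ring N\<^esub> a \<in> ?T"
        using a shift_neg[OF t ac] I.a_inv_closed by simp
    next
      fix a b assume a: "a \<in> ?T" and b: "b \<in> ?T"
      show "a \<oplus>\<^bsub>ps_ring N\<^esub> b \<in> ?T"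
        using a b I.a_closed by (simp add: shift_add)
    qed
  next
    fix a x :: "mono \<Rightarrow> 'a" assume a: "a \<in> ?T" and x: "x \<in> carrier (ps_ring N)"
    then have ac: "a \<in> carrier (ps_ring N)" using I.Icarr by blast
    have "shift t (x \<otimes>\<^bsub>ps_ring N\<^esub> a) \<in> Idl\<^bsub>ps_ring N\<^esub> S"
      unfolding shift_mult[OF t x ac]
      by (rule I.a_closed; rule I.I_l_closed) (use a x phi_carrier shift_carrier[OF t] in auto)
    then show "x \<otimes>\<^bsub>ps_ring N\<^esub> a \<in> ?T" using a x I.I_l_closed by simp
    then show "a \<otimes>\<^bsub>ps_ring N\<^esub> x \<in> ?T" using R.m_comm[OF x ac] by simp
  qed
  moreover have "S \<subseteq> ?T" using h R.genideal_self[OF S] by blast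
  ultimately have "Idl\<^bsub>ps_ring N\<^esub> S \<subseteq> ?T" by (rule R.genideal_minimal)
  then show ?thesis by blast
qed




lemma finsum_hom_lessThan:
  fixes A (structure) and B (structure) and k :: nat
  assumes A: "abelian_monoid A" and B: "abelian_monoid B"
    and h_add: "\<And>x y. x \<in> carrier A \<Longrightarrow> y \<in> carrier A \<Longrightarrow> h (x \<oplus>\<^bsub>A\<^esub> y) = h x \<oplus>\<^bsub>B\<^esub> h y"
    and h_zero: "h \<zero>\<^bsub>A\<^esub> = \<zero>\<^bsub>B\<^esub>" and h_carr: "\<And>x. x \<in> carrier A \<Longrightarrow> h x \<in> carrier B"
  shows "f \<in> {..<k} \<rightarrow> carrier A \<Longrightarrow> finsum B (\<lambda>j. h (f j)) {..<k} = h (finsum A f {..<k})"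
proof (induction k)
  case 0
  show ?case by (simp only: lessThan_0 abelian_monoid.finsum_empty[OF A] abelian_monoid.finsum_empty[OF B] h_zero)
next
  case (Suc k)
  have f: "f \<in> {..<k} \<rightarrow> carrier A" "f k \<in> carrier A" using Suc.prems by auto
  have hf: "(\<lambda>j. h (f j)) \<in> {..<k} \<rightarrow> carrier B" "h (f k) \<in> carrier B" using f h_carr by auto
  have "finsum B (\<lambda>j. h (f j)) {..<Suc k} = h (f k) \<oplus>\<^bsub>B\<^esub> finsum B (\<lambda>j. h (f j)) {..<k}"
    unfolding lessThan_Suc by (rule abelian_monoid.finsum_insert[OF B]) (use hf in auto)
  also have "\<dots> = h (f k) \<oplus>\<^bsub>B\<^esub> h (finsum A f {..<k})" using Suc.IH f by simp
  also have "\<dots> = h (f k \<oplus>\<^bsub>A\<^esub> finsum A f {..<k})"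
    using h_add f abelian_monoid.finsum_closed[OF A f(1)] by simp
  also have "f k \<oplus>\<^bsub>A\<^esub> finsum A f {..<k} = finsum A f {..<Suc k}"
    unfolding lessThan_Suc by (rule abelian_monoid.finsum_insert[OF A, symmetric]) (use f in auto)
  finally show ?case .
qed

lemma cos_eq:
  assumes "ideal I R" "x \<in> carrier R" "y \<in> carrier R"
  shows "(I +>\<^bsub>R\<^esub> x = I +>\<^bsub>R\<^esub> y) \<longleftrightarrow> x \<ominus>\<^bsub>R\<^esub> y \<in> I"
proof -
  interpret ideal I R by fact
  show ?thesis
    by (metis a_rcos_module_minus a_rcos_self a_repr_independence' assms(2,3) ring_axioms)
qed

locale fp =
  fixes N :: nat and I1 I2 I0 :: "(mono \<Rightarrow> 'a::field) set"
  assumes I1: "ideal I1 (ps_ring N)" and I2: "ideal I2 (ps_ring N)" and I0: "ideal I0 (ps_ring N)"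
    and dec: "\<forall>d\<in>I0. \<exists>\<alpha>\<in>I2. \<exists>\<beta>\<in>I1. d = \<alpha> \<oplus>\<^bsub>ps_ring N\<^esub> \<beta>"
begin

abbreviation "R \<equiv> (ps_ring N :: (mono \<Rightarrow> 'a) ring)"
abbreviation "M \<equiv> fiber_product_module R I1 I2 I0"

definition psi :: "(mono \<Rightarrow> 'a) \<Rightarrow> (mono \<Rightarrow> 'a) set \<times> (mono \<Rightarrow> 'a) set" where
  "psi r = (I1 +>\<^bsub>R\<^esub> r, I2 +>\<^bsub>R\<^esub> r)"

sublocale Rc: cring R by (rule ps_cring)

lemma psi_eq: "x \<in> carrier R \<Longrightarrow> y \<in> carrier R \<Longrightarrow> psi x = psi y \<longleftrightarrow> x \<ominus>\<^bsub>R\<^esub> y \<in> I1 \<and> x \<ominus>\<^bsub>R\<^esub> y \<in> I2"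
  unfolding psi_def using cos_eq[OF I1] cos_eq[OF I2] by simp

lemma carrier_M: "carrier M = psi ` carrier R"
proof
  show "psi ` carrier R \<subseteq> carrier M"
  proof
    fix z assume "z \<in> psi ` carrier R"
    then obtain r where r: "r \<in> carrier R" and z: "z = psi r" by blast
    have "r \<ominus>\<^bsub>R\<^esub> r = \<zero>\<^bsub>R\<^esub>" using r by algebra
    then have "r \<ominus>\<^bsub>R\<^esub> r \<in> I0" using additive_subgroup.zero_closed[OF ideal.axioms(1)[OF I0]] by simp
    then show "z \<in> carrier M" using r unfolding z psi_def fiber_product_module_def by auto
  qed
next
  show "carrier M \<subseteq> psi ` carrier R"
  proof
    fix z assume "z \<in> carrier M"
    then obtain a b where a: "a \<in> carrier R" and b: "b \<in> carrier R" and z: "z = (I1 +>\<^bsub>R\<^esub> a, I2 +>\<^bsub>R\<^esub> b)"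
      and ab: "a \<ominus>\<^bsub>R\<^esub> b \<in> I0" by (auto simp: fiber_product_module_def)
    obtain \<alpha> \<beta> where al: "\<alpha> \<in> I2" and be: "\<beta> \<in> I1" and d: "a \<ominus>\<^bsub>R\<^esub> b = \<alpha> \<oplus>\<^bsub>R\<^esub> \<beta>"
      using dec ab by blast
    have alc: "\<alpha> \<in> carrier R" using al ideal.Icarr[OF I2] by blast
    have bec: "\<beta> \<in> carrier R" using be ideal.Icarr[OF I1] by blast
    define r where "r = a \<ominus>\<^bsub>R\<^esub> \<beta>"
    have rc: "r \<in> carrier R" unfolding r_def using a bec by simp
    have "r \<ominus>\<^bsub>R\<^esub> a = \<ominus>\<^bsub>R\<^esub> \<beta>" unfolding r_def using a bec by algebra
    then have 1: "I1 +>\<^bsub>R\<^esub> r = I1 +>\<^bsub>R\<^esub> a"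
      using cos_eq[OF I1 rc a] be additive_subgroup.a_inv_closed[OF ideal.axioms(1)[OF I1]] by simp
    have "r \<ominus>\<^bsub>R\<^esub> b = (a \<ominus>\<^bsub>R\<^esub> b) \<ominus>\<^bsub>R\<^esub> \<beta>" unfolding r_def using a b bec by algebra
    also have "\<dots> = \<alpha>" unfolding d using alc bec by algebra
    finally have 2: "I2 +>\<^bsub>R\<^esub> r = I2 +>\<^bsub>R\<^esub> b"
      using cos_eq[OF I2 rc b] al by simp
    show "z \<in> psi ` carrier R" using 1 2 z rc unfolding psi_def by auto
  qed
qed

lemma psi_carrier: "x \<in> carrier R \<Longrightarrow> psi x \<in> carrier M"
  using carrier_M by blast

lemma psi_add: "x \<in> carrier R \<Longrightarrow> y \<in> carrier R \<Longrightarrow> psi x \<oplus>\<^bsub>M\<^esub> psi y = psi (x \<oplus>\<^bsub>R\<^esub> y)"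
  using ring_hom_add[OF ideal.rcos_ring_hom[OF I1]] ring_hom_add[OF ideal.rcos_ring_hom[OF I2]]
  by (simp add: psi_def fiber_product_module_def)

lemma psi_smult: "r \<in> carrier R \<Longrightarrow> x \<in> carrier R \<Longrightarrow> r \<odot>\<^bsub>M\<^esub> psi x = psi (r \<otimes>\<^bsub>R\<^esub> x)"
  using ring_hom_mult[OF ideal.rcos_ring_hom[OF I1]] ring_hom_mult[OF ideal.rcos_ring_hom[OF I2]]
  by (simp add: psi_def fiber_product_module_def)

lemma psi_zero: "\<zero>\<^bsub>M\<^esub> = psi \<zero>\<^bsub>R\<^esub>"
proof -
  interpret A: ideal I1 R by (rule I1)
  interpret B: ideal I2 R by (rule I2)
  show ?thesis using A.a_rcos_const[OF A.zero_closed] B.a_rcos_const[OF B.zero_closed]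
    by (simp add: psi_def fiber_product_module_def)
qed

lemma M_abelian: "abelian_monoid M"
proof (rule abelian_monoidI)
  fix x y assume "x \<in> carrier M" "y \<in> carrier M"
  then obtain a b where a: "a \<in> carrier R" "x = psi a" and b: "b \<in> carrier R" "y = psi b"
    unfolding carrier_M by (elim imageE) simp
  show "x \<oplus>\<^bsub>M\<^esub> y \<in> carrier M" using a b psi_add psi_carrier by simp
  show "x \<oplus>\<^bsub>M\<^esub> y = y \<oplus>\<^bsub>M\<^esub> x" using a b psi_add[of a b] psi_add[of b a] Rc.a_comm[of a b] by simp
next
  show "\<zero>\<^bsub>M\<^esub> \<in> carrier M" using psi_zero psi_carrier by simp
next
  fix x y z assume "x \<in> carrier M" "y \<in> carrier M" "z \<in> carrier M"
  then obtain a b c where a: "a \<in> carrier R" "x = psi a" and b: "b \<in> carrier R" "y = psi b"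
     and c: "c \<in> carrier R" "z = psi c"
    unfolding carrier_M by (elim imageE) simp
  show "x \<oplus>\<^bsub>M\<^esub> y \<oplus>\<^bsub>M\<^esub> z = x \<oplus>\<^bsub>M\<^esub> (y \<oplus>\<^bsub>M\<^esub> z)"
    using a b c psi_add[of a b] psi_add[of "a \<oplus>\<^bsub>R\<^esub> b" c] psi_add[of b c] psi_add[of a "b \<oplus>\<^bsub>R\<^esub> c"]
      Rc.a_assoc[of a b c] Rc.add.m_closed[of a b] Rc.add.m_closed[of b c] by simp
next
  fix x assume "x \<in> carrier M"
  then obtain a where a: "a \<in> carrier R" "x = psi a" unfolding carrier_M by (elim imageE) simp
  show "\<zero>\<^bsub>M\<^esub> \<oplus>\<^bsub>M\<^esub> x = x" using a psi_add[of "\<zero>\<^bsub>R\<^esub>" a] psi_zero Rc.l_zero[of a] by simp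
qed

lemma finsum_psi:
  fixes k :: nat
  assumes f: "f \<in> {..<k} \<rightarrow> carrier R"
  shows "finsum M (\<lambda>j. psi (f j)) {..<k} = psi (finsum R f {..<k})"
  using finsum_hom_lessThan[where h=psi, OF abelian_group.axioms(1)[OF Rc.is_abelian_group] M_abelian, of f k]
    f psi_add psi_zero psi_carrier by simp

end




lemma ideal_finsum:
  fixes k :: nat and R (structure)
  assumes I: "ideal I R"
  shows "f \<in> {..<k} \<rightarrow> I \<Longrightarrow> finsum R f {..<k} \<in> I"
proof (induction k)
  case 0
  interpret ideal I R by (rule I)
  show ?case using zero_closed by simp
next
  case (Suc k)
  interpret ideal I R by (rule I)
  have fc: "f \<in> {..<Suc k} \<rightarrow> carrier R" using Suc.prems Icarr by blast
  have "finsum R f {..<Suc k} = f k \<oplus> finsum R f {..<k}"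
    unfolding lessThan_Suc by (rule finsum_insert) (use fc in auto)
  moreover have "f k \<in> I" using Suc.prems by auto
  moreover have "finsum R f {..<k} \<in> I" using Suc.prems by (intro Suc.IH) auto
  ultimately show ?case using a_closed by auto
qed

definition lin :: "('a, 'b) ring_scheme \<Rightarrow> 'a list \<Rightarrow> 'a set" where
  "lin R zs = {finsum R (\<lambda>j. zs ! j \<otimes>\<^bsub>R\<^esub> r j) {..<length zs} | r. r \<in> {..<length zs} \<rightarrow> carrier R}"

definition m0 :: "nat \<Rightarrow> (mono \<Rightarrow> 'a::field) set" where
  "m0 N = {f \<in> carrier (ps_ring N). f (\<lambda>i. 0) = 0}"

lemma mult_at_zero:
  fixes f g :: "mono \<Rightarrow> 'a::field"
  shows "(f \<otimes>\<^bsub>ps_ring N\<^esub> g) (\<lambda>i. 0) = f (\<lambda>i. 0) * g (\<lambda>i. 0)"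
proof -
  have "{a::mono. \<forall>i. a i \<le> 0} = {\<lambda>i. 0}" by (auto simp: fun_eq_iff)
  moreover have "mono_in {..<N} (\<lambda>i. 0)" by (simp add: mono_in_def)
  ultimately show ?thesis by (simp add: ps_simps)
qed

lemma m0_ideal: "ideal (m0 N) (ps_ring N :: (mono \<Rightarrow> 'a::field) ring)"
proof -
  interpret R: cring "ps_ring N :: (mono \<Rightarrow> 'a) ring" by (rule ps_cring)
  show ?thesis
  proof (rule idealI)
    show "ring (ps_ring N :: (mono \<Rightarrow> 'a) ring)" by (rule R.ring_axioms)
    show "subgroup (m0 N) (add_monoid (ps_ring N :: (mono \<Rightarrow> 'a) ring))"
    proof (rule R.add.subgroupI)
      show "m0 N \<subseteq> carrier (ps_ring N)" by (auto simp: m0_def)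
      show "(m0 N :: (mono \<Rightarrow> 'a) set) \<noteq> {}"
        using R.zero_closed by (auto simp: m0_def ps_simps)
    next
      fix a :: "mono \<Rightarrow> 'a" assume "a \<in> m0 N"
      then show "\<ominus>\<^bsub>ps_ring N\<^esub> a \<in> m0 N" by (auto simp: m0_def ps_neg) (auto simp: ps_simps)
    next
      fix a b :: "mono \<Rightarrow> 'a" assume "a \<in> m0 N" "b \<in> m0 N"
      then show "a \<oplus>\<^bsub>ps_ring N\<^esub> b \<in> m0 N" by (auto simp: m0_def ps_simps, metis add.right_neutral)
    qed
  next
    fix a x :: "mono \<Rightarrow> 'a" assume "a \<in> m0 N" "x \<in> carrier (ps_ring N)"
    then show "x \<otimes>\<^bsub>ps_ring N\<^esub> a \<in> m0 N" "a \<otimes>\<^bsub>ps_ring N\<^esub> x \<in> m0 N"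
      by (auto simp: m0_def mult_at_zero)
  qed
qed

lemma var_m0: "s < N \<Longrightarrow> (ps_var s :: mono \<Rightarrow> 'a::field) \<in> m0 N"
  unfolding m0_def using var_carrier[of s N] by (auto simp: ps_var_def fun_eq_iff)

lemma one_not_m0: "\<one>\<^bsub>ps_ring N\<^esub> \<notin> (m0 N :: (mono \<Rightarrow> 'a::field) set)"
  by (simp add: m0_def ps_simps)

context fp
begin

lemma submod_eq:
  assumes zs: "set zs \<subseteq> carrier R"
  shows "submod_gen M zs = psi ` lin R zs"
proof
  show "submod_gen M zs \<subseteq> psi ` lin R zs"
  proof
    fix x assume "x \<in> submod_gen M zs"
    then obtain v where v: "v \<in> {..<length zs} \<rightarrow> carrier M"
      and x: "x = finsum M (\<lambda>j. zs ! j \<odot>\<^bsub>M\<^esub> v j) {..<length zs}"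
      by (auto simp: submod_gen_def)
    define r where "r j = (SOME a. a \<in> carrier R \<and> v j = psi a)" for j
    have r: "r j \<in> carrier R \<and> v j = psi (r j)" if "j < length zs" for j
    proof -
      have "\<exists>a. a \<in> carrier R \<and> v j = psi a" using v that carrier_M by auto
      then show ?thesis unfolding r_def by (rule someI_ex)
    qed
    have zc: "zs ! j \<in> carrier R" if "j < length zs" for j using zs that by auto
    have "x = finsum M (\<lambda>j. psi (zs ! j \<otimes>\<^bsub>R\<^esub> r j)) {..<length zs}"
      unfolding x
      by (rule abelian_monoid.finsum_cong'[OF M_abelian refl])
         (use r zc in \<open>auto simp: psi_smult psi_carrier\<close>)
    also have "\<dots> = psi (finsum R (\<lambda>j. zs ! j \<otimes>\<^bsub>R\<^esub> r j) {..<length zs})"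
      by (rule finsum_psi) (use r zc in auto)
    finally show "x \<in> psi ` lin R zs"
      unfolding lin_def using r by blast
  qed
next
  show "psi ` lin R zs \<subseteq> submod_gen M zs"
  proof
    fix x assume "x \<in> psi ` lin R zs"
    then obtain r where r: "r \<in> {..<length zs} \<rightarrow> carrier R"
      and x: "x = psi (finsum R (\<lambda>j. zs ! j \<otimes>\<^bsub>R\<^esub> r j) {..<length zs})"
      by (auto simp: lin_def)
    have zc: "zs ! j \<in> carrier R" if "j < length zs" for j using zs that by auto
    have rc: "r j \<in> carrier R" if "j < length zs" for j using r that by auto
    have "x = finsum M (\<lambda>j. psi (zs ! j \<otimes>\<^bsub>R\<^esub> r j)) {..<length zs}"
      unfolding x by (rule finsum_psi[symmetric]) (use rc zc in auto)
    also have "\<dots> = finsum M (\<lambda>j. zs ! j \<odot>\<^bsub>M\<^esub> psi (r j)) {..<length zs}"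
      by (rule abelian_monoid.finsum_cong'[OF M_abelian refl])
         (use rc zc in \<open>auto simp: psi_smult psi_carrier\<close>)
    finally show "x \<in> submod_gen M zs"
      unfolding submod_gen_def using r psi_carrier by (auto intro!: exI[of _ "\<lambda>j. psi (r j)"])
  qed
qed


lemma lin_shift:
  assumes t: "t < N" and js: "\<forall>s\<in>set js. s < N \<and> s \<noteq> t"
    and l: "l \<in> lin R (map ps_var js)"
  shows "shift t l \<in> lin R (map ps_var js)"
proof -
  let ?zs = "map ps_var js :: (mono \<Rightarrow> 'a) list"
  obtain r where r: "r \<in> {..<length ?zs} \<rightarrow> carrier R"
    and l: "l = finsum R (\<lambda>j. ?zs ! j \<otimes>\<^bsub>R\<^esub> r j) {..<length ?zs}"
    using l by (auto simp: lin_def)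
  have zc: "?zs ! j \<in> carrier R" if "j < length ?zs" for j
  proof -
    have "js ! j \<in> set js" using that by simp
    then show ?thesis using that js var_carrier[of "js ! j" N] by auto
  qed
  have rc: "r j \<in> carrier R" if "j < length ?zs" for j using r that by auto
  have ab: "abelian_monoid R" by (rule abelian_group.axioms(1)[OF Rc.is_abelian_group])
  have "shift t l = finsum R (\<lambda>j. shift t (?zs ! j \<otimes>\<^bsub>R\<^esub> r j)) {..<length ?zs}"
    unfolding l
    by (rule finsum_hom_lessThan[where h="shift t", OF ab ab, symmetric])
       (use zc rc in \<open>auto simp: shift_add shift_zero shift_carrier[OF t]\<close>)
  also have "\<dots> = finsum R (\<lambda>j. ?zs ! j \<otimes>\<^bsub>R\<^esub> shift t (r j)) {..<length ?zs}"
  proof (rule Rc.finsum_cong'[OF refl])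
    show "(\<lambda>j. ?zs ! j \<otimes>\<^bsub>R\<^esub> shift t (r j)) \<in> {..<length ?zs} \<rightarrow> carrier R"
      using zc rc shift_carrier[OF t] by (auto intro!: Rc.m_closed)
  next
    fix j assume "j \<in> {..<length ?zs}"
    then have j: "j < length js" by simp
    then have ne: "js ! j \<noteq> t" "js ! j < N" using js by auto
    have "shift t (?zs ! j) = \<zero>\<^bsub>R\<^esub>"
      using j shift_fixed[OF var_other_fixed[OF ne(1)]] by simp
    moreover have "phi t (?zs ! j) = ?zs ! j"
      using j phi_fixed[OF var_other_fixed[OF ne(1)]] by simp
    moreover have j': "j < length ?zs" using j by simp
    moreover have "?zs ! j \<otimes>\<^bsub>R\<^esub> shift t (r j) \<in> carrier R"
      using zc[OF j'] shift_carrier[OF t rc[OF j']] by simp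
    ultimately show "shift t (?zs ! j \<otimes>\<^bsub>R\<^esub> r j) = ?zs ! j \<otimes>\<^bsub>R\<^esub> shift t (r j)"
      using shift_mult[OF t zc[OF j'] rc[OF j']] rc[OF j'] by simp
  qed
  finally show ?thesis unfolding lin_def using rc shift_carrier[OF t]
    by (auto intro!: exI[of _ "\<lambda>j. shift t (r j)"])
qed

lemma lin_m0:
  assumes js: "\<forall>s\<in>set js. s < N"
  shows "lin R (map ps_var js) \<subseteq> m0 N"
proof
  fix l assume "l \<in> lin R (map ps_var js)"
  then obtain r where r: "r \<in> {..<length js} \<rightarrow> carrier R"
    and l: "l = finsum R (\<lambda>j. map ps_var js ! j \<otimes>\<^bsub>R\<^esub> r j) {..<length js}"
    by (auto simp: lin_def)
  interpret m: ideal "m0 N" R by (rule m0_ideal)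
  show "l \<in> m0 N" unfolding l
  proof (rule ideal_finsum[OF m0_ideal], rule Pi_I)
    fix j assume "j \<in> {..<length js}"
    then have j: "j < length js" by simp
    then have "js ! j \<in> set js" by simp
    then have "ps_var (js ! j) \<in> m0 N" using js var_m0 by blast
    then show "map ps_var js ! j \<otimes>\<^bsub>R\<^esub> r j \<in> m0 N" using j r m.I_r_closed by auto
  qed
qed

lemma regular_main:
  assumes ids_d: "distinct ids" and ids_N: "\<forall>t\<in>set ids. t < N"
    and sh1: "\<forall>t\<in>set ids. \<forall>k\<in>I1. shift t k \<in> I1"
    and sh2: "\<forall>t\<in>set ids. \<forall>k\<in>I2. shift t k \<in> I2"
    and I1m: "I1 \<subseteq> m0 N"
  shows "regular_sequence R M (map ps_var ids)"
  unfolding regular_sequence_def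
proof (intro conjI allI impI ballI)
  show "set (map ps_var ids) \<subseteq> carrier R" using ids_N var_carrier by auto
next
  fix i v assume i: "i < length (map ps_var ids)" and v: "v \<in> carrier M"
    and hv: "map ps_var ids ! i \<odot>\<^bsub>M\<^esub> v \<in> submod_gen M (take i (map ps_var ids))"
  define t where "t = ids ! i"
  have i': "i < length ids" using i by simp
  have t: "t < N" using ids_N i' unfolding t_def by auto
  have tk: "take i (map ps_var ids) = map ps_var (take i ids)" by (simp add: take_map)
  have js: "\<forall>s\<in>set (take i ids). s < N \<and> s \<noteq> t"
  proof
    fix s assume "s \<in> set (take i ids)"
    then obtain j where j: "j < length (take i ids)" "take i ids ! j = s" by (auto simp: in_set_conv_nth)
    then have "j < i" "ids ! j = s" using i' by auto
    then have "s \<noteq> t" using ids_d i' unfolding t_def by (metis nat_neq_iff nth_eq_iff_index_eq order.strict_trans)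
    moreover have "s < N" using ids_N \<open>s \<in> set (take i ids)\<close> by (meson in_set_takeD)
    ultimately show "s < N \<and> s \<noteq> t" by simp
  qed
  have setc: "set (map ps_var (take i ids)) \<subseteq> carrier R" using js var_carrier by auto
  have zi: "map ps_var ids ! i = ps_var t" using i' unfolding t_def by simp
  have vt: "(ps_var t :: mono \<Rightarrow> 'a) \<in> carrier R" by (rule var_carrier[OF t])
  obtain x where x: "x \<in> carrier R" and vx: "v = psi x" using v carrier_M by auto
  have "psi (ps_var t \<otimes>\<^bsub>R\<^esub> x) \<in> psi ` lin R (map ps_var (take i ids))"
    using hv unfolding zi vx tk submod_eq[OF setc] using psi_smult[OF vt x] by simp
  then obtain l where l: "l \<in> lin R (map ps_var (take i ids))"
    and e: "psi (ps_var t \<otimes>\<^bsub>R\<^esub> x) = psi l" by auto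
  have lc: "l \<in> carrier R" using lin_m0[of "take i ids"] js l m0_def by blast
  define c where "c = (ps_var t \<otimes>\<^bsub>R\<^esub> x) \<ominus>\<^bsub>R\<^esub> l"
  have c: "c \<in> I1" "c \<in> I2" using psi_eq[of "ps_var t \<otimes>\<^bsub>R\<^esub> x" l] e vt x lc unfolding c_def by auto
  have cc: "c \<in> carrier R" unfolding c_def using vt x lc by simp
  have "ps_var t \<otimes>\<^bsub>R\<^esub> x = l \<oplus>\<^bsub>R\<^esub> c" unfolding c_def using vt x lc by algebra
  then have "shift t (ps_var t \<otimes>\<^bsub>R\<^esub> x) = shift t l \<oplus>\<^bsub>R\<^esub> shift t c" by (simp add: shift_add)
  then have xe: "x = shift t l \<oplus>\<^bsub>R\<^esub> shift t c" using shift_var_mult[OF t x] by simp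
  have tids: "t \<in> set ids" using i' unfolding t_def by simp
  have sc: "shift t c \<in> I1" "shift t c \<in> I2" using sh1 sh2 c tids by auto
  have slc: "shift t l \<in> carrier R" "shift t c \<in> carrier R" using shift_carrier[OF t] lc cc by auto
  have "x \<ominus>\<^bsub>R\<^esub> shift t l = shift t c" unfolding xe using slc by algebra
  then have "psi x = psi (shift t l)" using psi_eq[OF x slc(1)] sc by simp
  moreover have "shift t l \<in> lin R (map ps_var (take i ids))" by (rule lin_shift[OF t js l])
  ultimately show "v \<in> submod_gen M (take i (map ps_var ids))"
    unfolding vx tk submod_eq[OF setc] by simp
next
  have setc: "set (map ps_var ids) \<subseteq> carrier R" using ids_N var_carrier by auto
  show "submod_gen M (map ps_var ids) \<noteq> carrier M"
  proof
    assume eq: "submod_gen M (map ps_var ids) = carrier M"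
    have "psi \<one>\<^bsub>R\<^esub> \<in> carrier M" using psi_carrier by simp
    then obtain l where l: "l \<in> lin R (map ps_var ids)" and e: "psi \<one>\<^bsub>R\<^esub> = psi l"
      using eq submod_eq[OF setc] by auto
    have lm: "l \<in> m0 N" using lin_m0[OF ids_N] l by auto
    interpret m: ideal "m0 N" R by (rule m0_ideal)
    have lc: "l \<in> carrier R" using lm m.Icarr by blast
    have "\<one>\<^bsub>R\<^esub> \<ominus>\<^bsub>R\<^esub> l \<in> I1" using psi_eq[of "\<one>\<^bsub>R\<^esub>" l] e lc by simp
    then have "\<one>\<^bsub>R\<^esub> \<ominus>\<^bsub>R\<^esub> l \<in> m0 N" using I1m by auto
    then have "(\<one>\<^bsub>R\<^esub> \<ominus>\<^bsub>R\<^esub> l) \<oplus>\<^bsub>R\<^esub> l \<in> m0 N" using lm m.a_closed by blast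
    moreover have "(\<one>\<^bsub>R\<^esub> \<ominus>\<^bsub>R\<^esub> l) \<oplus>\<^bsub>R\<^esub> l = \<one>\<^bsub>R\<^esub>" using lc by algebra
    ultimately show False using one_not_m0 by metis
  qed
qed

end




lemma shift_idl_gen:
  fixes G :: "(mono \<Rightarrow> 'a::field) set"
  assumes t: "t < N" "t \<notin> V" and G: "G \<subseteq> carrier (ps_ring N)"
    and sup: "\<forall>g\<in>G. \<forall>m. g m \<noteq> 0 \<longrightarrow> mono_in V m"
  shows "\<forall>k\<in>Idl\<^bsub>ps_ring N\<^esub> G. shift t k \<in> Idl\<^bsub>ps_ring N\<^esub> G"
proof (rule shift_ideal[OF t(1) G], rule ballI)
  interpret R: cring "ps_ring N :: (mono \<Rightarrow> 'a) ring" by (rule ps_cring)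
  interpret I: ideal "Idl\<^bsub>ps_ring N\<^esub> G" "ps_ring N" by (rule R.genideal_ideal[OF G])
  fix g assume g: "g \<in> G"
  have "\<forall>m. g m \<noteq> 0 \<longrightarrow> m t = 0" using sup g t(2) by (auto simp: mono_in_def)
  then have "shift t g = \<zero>\<^bsub>ps_ring N\<^esub>" by (rule shift_fixed)
  then show "shift t g \<in> Idl\<^bsub>ps_ring N\<^esub> G" using I.zero_closed by simp
qed

lemma shift_idl_union:
  fixes J Y :: "(mono \<Rightarrow> 'a::field) set"
  assumes t: "t < N" and J: "J \<subseteq> carrier (ps_ring N)" and Y: "Y \<subseteq> carrier (ps_ring N)"
    and sJ: "\<forall>k\<in>J. shift t k \<in> J" and sY: "\<forall>y\<in>Y. shift t y = \<zero>\<^bsub>ps_ring N\<^esub>"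
  shows "\<forall>k\<in>Idl\<^bsub>ps_ring N\<^esub> (J \<union> Y). shift t k \<in> Idl\<^bsub>ps_ring N\<^esub> (J \<union> Y)"
proof (rule shift_ideal[OF t], use J Y in blast, rule ballI)
  interpret R: cring "ps_ring N :: (mono \<Rightarrow> 'a) ring" by (rule ps_cring)
  have JY: "J \<union> Y \<subseteq> carrier (ps_ring N)" using J Y by blast
  interpret I: ideal "Idl\<^bsub>ps_ring N\<^esub> (J \<union> Y)" "ps_ring N" by (rule R.genideal_ideal[OF JY])
  have sub: "J \<union> Y \<subseteq> Idl\<^bsub>ps_ring N\<^esub> (J \<union> Y)" by (rule R.genideal_self[OF JY])
  fix s assume "s \<in> J \<union> Y"
  then show "shift t s \<in> Idl\<^bsub>ps_ring N\<^esub> (J \<union> Y)"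
  proof
    assume "s \<in> J" then show ?thesis using sJ sub by blast
  next
    assume "s \<in> Y" then show ?thesis using sY I.zero_closed by simp
  qed
qed

theorem lemma3p4:
  fixes n n' p q :: nat
    and J J' :: "(mono \<Rightarrow> 'a::field) set"
  defines "R \<equiv> (ps_ring (n + n') :: (mono \<Rightarrow> 'a) ring)"
    and "xt \<equiv> {ps_var i | i. p \<le> i \<and> i < n}"
    and "yt \<equiv> {ps_var (n + j) | j. q \<le> j \<and> j < n'}"
  assumes "p \<le> n" and "q \<le> n'"
    and "\<exists>G \<subseteq> carrier R. (\<forall>g\<in>G. \<forall>m. g m \<noteq> 0 \<longrightarrow> mono_in {p..<n} m) \<and> J = Idl\<^bsub>R\<^esub> G"
    and "J \<subseteq> Idl\<^bsub>R\<^esub> {f \<otimes>\<^bsub>R\<^esub> g | f g. f \<in> xt \<and> g \<in> xt}"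
    and "\<exists>G \<subseteq> carrier R. (\<forall>g\<in>G. \<forall>m. g m \<noteq> 0 \<longrightarrow> mono_in {n + q..<n + n'} m) \<and> J' = Idl\<^bsub>R\<^esub> G"
    and "J' \<subseteq> Idl\<^bsub>R\<^esub> {f \<otimes>\<^bsub>R\<^esub> g | f g. f \<in> yt \<and> g \<in> yt}"
  shows "regular_sequence R
           (fiber_product_module R (Idl\<^bsub>R\<^esub> (J \<union> yt)) (Idl\<^bsub>R\<^esub> (xt \<union> J')) (Idl\<^bsub>R\<^esub> (xt \<union> yt)))
           (map ps_var [0..<p] @ map (\<lambda>j. ps_var (n + j)) [0..<q])"
proof -
  let ?N = "n + n'"
  let ?R = "ps_ring (n + n') :: (mono \<Rightarrow> 'a) ring"
  interpret Rc: cring ?R by (rule ps_cring)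
  have xt_c: "xt \<subseteq> carrier ?R"
  proof
    fix x assume "x \<in> xt"
    then obtain i where i: "i < n" "x = ps_var i" unfolding xt_def by blast
    then show "x \<in> carrier ?R" using var_carrier[of i ?N] by simp
  qed
  have yt_c: "yt \<subseteq> carrier ?R"
  proof
    fix x assume "x \<in> yt"
    then obtain j where j: "j < n'" "x = ps_var (n + j)" unfolding yt_def by blast
    then show "x \<in> carrier ?R" using var_carrier[of "n + j" ?N] by simp
  qed
  from assms(6) obtain G where G0: "G \<subseteq> carrier R" "\<forall>g\<in>G. \<forall>m. g m \<noteq> 0 \<longrightarrow> mono_in {p..<n} m"
    "J = Idl\<^bsub>R\<^esub> G" by (elim exE conjE)
  have G: "G \<subseteq> carrier ?R" "\<forall>g\<in>G. \<forall>m. g m \<noteq> 0 \<longrightarrow> mono_in {p..<n} m"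
    "J = Idl\<^bsub>?R\<^esub> G" using G0 unfolding R_def by auto
  from assms(8) obtain G'' where G1: "G'' \<subseteq> carrier R" "\<forall>g\<in>G''. \<forall>m. g m \<noteq> 0 \<longrightarrow> mono_in {n + q..<n + n'} m"
    "J' = Idl\<^bsub>R\<^esub> G''" by (elim exE conjE)
  define G' where "G' = G''"
  have G': "G' \<subseteq> carrier ?R" "\<forall>g\<in>G'. \<forall>m. g m \<noteq> 0 \<longrightarrow> mono_in {n + q..<n + n'} m"
    "J' = Idl\<^bsub>?R\<^esub> G'" using G1 unfolding R_def G'_def by auto
  have J_c: "J \<subseteq> carrier ?R" using ideal.Icarr[OF Rc.genideal_ideal[OF G(1)]] G(3) by blast
  have J'_c: "J' \<subseteq> carrier ?R" using ideal.Icarr[OF Rc.genideal_ideal[OF G'(1)]] G'(3) by blast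
  define I1 where "I1 = Idl\<^bsub>?R\<^esub> (J \<union> yt)"
  define I2 where "I2 = Idl\<^bsub>?R\<^esub> (xt \<union> J')"
  define I0 where "I0 = Idl\<^bsub>?R\<^esub> (xt \<union> yt)"
  have iI1: "ideal I1 ?R" unfolding I1_def by (rule Rc.genideal_ideal) (use J_c yt_c in blast)
  have iI2: "ideal I2 ?R" unfolding I2_def by (rule Rc.genideal_ideal) (use J'_c xt_c in blast)
  have iI0: "ideal I0 ?R" unfolding I0_def by (rule Rc.genideal_ideal) (use xt_c yt_c in blast)
  have ix: "ideal (Idl\<^bsub>?R\<^esub> xt) ?R" by (rule Rc.genideal_ideal[OF xt_c])
  have iy: "ideal (Idl\<^bsub>?R\<^esub> yt) ?R" by (rule Rc.genideal_ideal[OF yt_c])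
  have xI2: "Idl\<^bsub>?R\<^esub> xt \<subseteq> I2"
    by (rule Rc.genideal_minimal[OF iI2]) (use Rc.genideal_self[of "xt \<union> J'"] xt_c J'_c in \<open>auto simp: I2_def\<close>)
  have yI1: "Idl\<^bsub>?R\<^esub> yt \<subseteq> I1"
    by (rule Rc.genideal_minimal[OF iI1]) (use Rc.genideal_self[of "J \<union> yt"] yt_c J_c in \<open>auto simp: I1_def\<close>)
  have "I0 \<subseteq> Idl\<^bsub>?R\<^esub> xt <+>\<^bsub>?R\<^esub> Idl\<^bsub>?R\<^esub> yt"
    unfolding I0_def
  proof (rule Rc.genideal_minimal[OF Rc.add_ideals[OF ix iy]], rule subsetI)
    fix z assume z: "z \<in> xt \<union> yt"
    show "z \<in> Idl\<^bsub>?R\<^esub> xt <+>\<^bsub>?R\<^esub> Idl\<^bsub>?R\<^esub> yt"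
    proof (cases "z \<in> xt")
      case True
      then have "z \<in> Idl\<^bsub>?R\<^esub> xt" using Rc.genideal_self[OF xt_c] by blast
      moreover have "z = z \<oplus>\<^bsub>?R\<^esub> \<zero>\<^bsub>?R\<^esub>" using True xt_c by auto
      moreover have "\<zero>\<^bsub>?R\<^esub> \<in> Idl\<^bsub>?R\<^esub> yt" using ideal.axioms(1)[OF iy] additive_subgroup.zero_closed by blast
      ultimately show ?thesis unfolding set_add_def' by blast
    next
      case False
      then have zy: "z \<in> yt" using z by blast
      then have "z \<in> Idl\<^bsub>?R\<^esub> yt" using Rc.genideal_self[OF yt_c] by blast
      moreover have "z = \<zero>\<^bsub>?R\<^esub> \<oplus>\<^bsub>?R\<^esub> z" using zy yt_c by auto
      moreover have "\<zero>\<^bsub>?R\<^esub> \<in> Idl\<^bsub>?R\<^esub> xt" using ideal.axioms(1)[OF ix] additive_subgroup.zero_closed by blast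
      ultimately show ?thesis unfolding set_add_def' by blast
    qed
  qed
  then have dec: "\<forall>d\<in>I0. \<exists>\<alpha>\<in>I2. \<exists>\<beta>\<in>I1. d = \<alpha> \<oplus>\<^bsub>?R\<^esub> \<beta>"
    using xI2 yI1 unfolding set_add_def' by blast
  interpret F: fp ?N I1 I2 I0 by (rule fp.intro[OF iI1 iI2 iI0 dec])
  define ids where "ids = [0..<p] @ map (\<lambda>j. n + j) [0..<q]"
  have list: "map ps_var [0..<p] @ map (\<lambda>j. ps_var (n + j)) [0..<q] = map ps_var ids"
    by (simp add: ids_def)
  have ids_N: "\<forall>t\<in>set ids. t < ?N" using assms(4,5) by (auto simp: ids_def)
  have ids_d: "distinct ids" using assms(4) by (auto simp: ids_def distinct_map inj_on_def)
  have ids_out: "\<forall>t\<in>set ids. t \<notin> {p..<n} \<and> t \<notin> {n + q..<n + n'}" using assms(4,5) by (auto simp: ids_def)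
  have sh1: "\<forall>t\<in>set ids. \<forall>k\<in>I1. shift t k \<in> I1"
  proof
    fix t assume t: "t \<in> set ids"
    have sJ: "\<forall>k\<in>J. shift t k \<in> J" unfolding G(3)
      by (rule shift_idl_gen[OF _ _ G(1) G(2)]) (use t ids_N ids_out in auto)
    have sY: "\<forall>y\<in>yt. shift t y = \<zero>\<^bsub>?R\<^esub>"
    proof
      fix y assume "y \<in> yt"
      then obtain j where j: "q \<le> j" "y = ps_var (n + j)" "j < n'" unfolding yt_def by blast
      have "n + j \<noteq> t" using t ids_out j(1,3) assms(4,5) by (auto simp: ids_def)
      then show "shift t y = \<zero>\<^bsub>?R\<^esub>" unfolding j(2) by (rule shift_fixed[OF var_other_fixed])
    qed
    show "\<forall>k\<in>I1. shift t k \<in> I1" unfolding I1_def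
      by (rule shift_idl_union[OF _ J_c yt_c sJ sY]) (use t ids_N in auto)
  qed
  have sh2: "\<forall>t\<in>set ids. \<forall>k\<in>I2. shift t k \<in> I2"
  proof
    fix t assume t: "t \<in> set ids"
    have sJ: "\<forall>k\<in>J'. shift t k \<in> J'" unfolding G'(3)
      by (rule shift_idl_gen[OF _ _ G'(1) G'(2)]) (use t ids_N ids_out in auto)
    have sY: "\<forall>y\<in>xt. shift t y = \<zero>\<^bsub>?R\<^esub>"
    proof
      fix y assume "y \<in> xt"
      then obtain i where i: "p \<le> i" "i < n" "y = ps_var i" unfolding xt_def by blast
      have "i \<noteq> t" using t ids_out i by auto
      then show "shift t y = \<zero>\<^bsub>?R\<^esub>" unfolding i(3) by (rule shift_fixed[OF var_other_fixed])
    qed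
    have "\<forall>k\<in>Idl\<^bsub>?R\<^esub> (J' \<union> xt). shift t k \<in> Idl\<^bsub>?R\<^esub> (J' \<union> xt)"
      by (rule shift_idl_union[OF _ J'_c xt_c sJ sY]) (use t ids_N in auto)
    then show "\<forall>k\<in>I2. shift t k \<in> I2" unfolding I2_def by (simp add: Un_commute)
  qed
  interpret m: ideal "m0 ?N" ?R by (rule m0_ideal)
  have xt_m: "xt \<subseteq> m0 ?N"
  proof
    fix x assume "x \<in> xt"
    then obtain i where i: "i < n" "x = ps_var i" unfolding xt_def by blast
    then show "x \<in> m0 ?N" using var_m0[of i ?N] by simp
  qed
  have yt_m: "yt \<subseteq> m0 ?N"
  proof
    fix x assume "x \<in> yt"
    then obtain j where j: "j < n'" "x = ps_var (n + j)" unfolding yt_def by blast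
    then show "x \<in> m0 ?N" using var_m0[of "n + j" ?N] by simp
  qed
  have P_m: "{f \<otimes>\<^bsub>?R\<^esub> g | f g. f \<in> xt \<and> g \<in> xt} \<subseteq> m0 ?N"
    using xt_m xt_c m.I_r_closed by blast
  have J_m: "J \<subseteq> m0 ?N"
    using assms(7) Rc.genideal_minimal[OF m0_ideal P_m] unfolding R_def by blast
  have I1m: "I1 \<subseteq> m0 ?N" unfolding I1_def
    by (rule Rc.genideal_minimal[OF m0_ideal]) (use J_m yt_m in blast)
  show ?thesis
    using F.regular_main[OF ids_d ids_N sh1 sh2 I1m]
    unfolding R_def list I1_def I2_def I0_def .
qed



end
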